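(* Consider the protocol $P_{RL}$ with parameter $N$ on a directed ring of size $n$ with $2\le n\le N$. The set $\mathcal{C}_{NI}$ of configurations (defined in the context) is closed: no configuration outside $\mathcal{C}_{NI}$ is reachable from a configuration in $\mathcal{C}_{NI}$.
   Context: Model. A population is a directed ring of $n\ge 2$ anonymous agents $u_0,\dots,u_{n-1}$ (indices modulo $n$) with arcs $e_i=(u_i,u_{i+1})$. A configuration $C$ assigns a state to each agent; $C\to C'$ means that $C'$ is obtained from $C$ by one interaction on some arc $e_i$, in which initiator $u_i$ and responder $u_{i+1}$ update their states by the transition function and all other agents keep their states. A configuration is reachable from $C$ if it is obtained from $C$ by finitely many such steps. Protocol $P_{RL}$ (parameter $N$). Each agent has variables $\mathit{leader}\in\{0,1\}$, $\mathit{bullet}\in\{0,1,2\}$, $\mathit{shield}\in\{0,1\}$, $\mathit{signal}\in\{0,1\}$, $\mathit{dist}\in\{0,\dots,N\}$. In an interaction with initiator $l$ and responder $r$ the following are executed in order: 1. If $l.\mathit{leader}=1$ then $l.\mathit{dist}\gets 0$. 2. If $r.\mathit{leader}=1$ then $r.\mathit{dist}\gets 0$; else if $r.\mathit{bullet}=0$ then $r.\mathit{dist}\gets\min(l.\mathit{dist}+1,N)$. 3. If $r.\mathit{dist}=N$ then $r.\mathit{leader}\gets1$, $r.\mathit{bullet}\gets2$, $r.\mathit{shield}\gets1$, $r.\mathit{signal}\gets0$, $r.\mathit{dist}\gets0$. 4. If $l.\mathit{leader}=1$ and $l.\mathit{signal}=1$ then $l.\mathit{bullet}\gets2$, $l.\mathit{shield}\gets1$,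 $l.\mathit{signal}\gets0$. 5. If $r.\mathit{leader}=1$ and $r.\mathit{signal}=1$ then $r.\mathit{bullet}\gets1$, $r.\mathit{shield}\gets0$, $r.\mathit{signal}\gets0$. 6. If $l.\mathit{bullet}>0$ and $r.\mathit{leader}=1$: set $r.\mathit{leader}\gets0$ if ($l.\mathit{bullet}=2$ and $r.\mathit{shield}=0$); then $l.\mathit{bullet}\gets0$. Else, if $l.\mathit{bullet}>0$ and $r.\mathit{leader}=0$: if $r.\mathit{bullet}=0$ then $r.\mathit{bullet}\gets l.\mathit{bullet}$; then $l.\mathit{bullet}\gets0$ and $r.\mathit{signal}\gets0$. 7. $l.\mathit{signal}\gets\max(l.\mathit{signal},r.\mathit{signal},r.\mathit{leader})$. An agent is a leader if $\mathit{leader}=1$ and a follower otherwise. Definitions (in a configuration with at least one leader). $\mathrm{dist}_L(i)=\min\{j\ge0: u_{i-j}.\mathit{leader}=1\}$ and $\mathrm{dist}_R(i)=\min\{j\ge0: u_{i+j}.\mathit{leader}=1\}$. $\mathrm{peaceful}(i)$ holds iff $u_{i-\mathrm{dist}_L(i)}.\mathit{shield}=1$ and $u_{i-j}.\mathit{signal}=0$ for all $0\le j\le\mathrm{dist}_L(i)$. $\mathrm{modest}(i)$ holds iff $\mathrm{peaceful}(i)$ holds and $u_{i-j}.\mathit{dist}\le\mathrm{dist}_L(i-j)$ for all $0\le j\le\mathrm{dist}_L(i)$. $\mathrm{secure}(i)$ holds iff $u_i.\mathit{dist}=0$ when $u_i.\mathit{leader}=1$, and $u_i.\mathit{dist}\le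 N-\mathrm{dist}_R(i)$ when $u_i.\mathit{leader}=0$. $\mathcal{C}_{PB}$ is the set of configurations with at least one leader in which every $u_j$ with $u_j.\mathit{bullet}=2$ satisfies $\mathrm{peaceful}(j)$. $\mathcal{C}_{NI}$ is the set of configurations in $\mathcal{C}_{PB}$ in which every agent $u_i$ satisfies $\mathrm{secure}(i)$ and every $u_j$ with $u_j.\mathit{bullet}=2$ satisfies $\mathrm{modest}(j)$. *)

theory Defs
  imports Main
begin

record agent =
  leader :: nat
  bullet :: nat
  shield :: nat
  signal :: nat
  dst    :: nat

type_synonym config = "nat \<Rightarrow> agent"

definition valid_state :: "nat \<Rightarrow> agent \<Rightarrow> bool" where
  "valid_state N s \<longleftrightarrow> leader s \<le> 1 \<and> bullet s \<le> 2 \<and> shield s \<le> 1 \<and> signal s \<le> 1 \<and> dst s \<le> N"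

definition valid_config :: "nat \<Rightarrow> nat \<Rightarrow> config \<Rightarrow> bool" where
  "valid_config N n C \<longleftrightarrow> (\<forall>i<n. valid_state N (C i))"

text \<open>Transition function: initiator l, responder r; steps 1-7 executed in order.\<close>
definition delta :: "nat \<Rightarrow> agent \<Rightarrow> agent \<Rightarrow> agent \<times> agent" where
  "delta N l r = (
     let l1 = (if leader l = 1 then l\<lparr>dst := 0\<rparr> else l);
         r2 = (if leader r = 1 then r\<lparr>dst := 0\<rparr>
               else if bullet r = 0 then r\<lparr>dst := min (dst l1 + 1) N\<rparr> else r);
         r3 = (if dst r2 = N then r2\<lparr>leader := 1, bullet := 2, shield := 1, signal := 0, dst := 0\<rparr> else r2);
         l4 = (if leader l1 = 1 \<and> signal l1 = 1 then l1\<lparr>bullet := 2, shield := 1, signal := 0\<rparr> else l1);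
         r5 = (if leader r3 = 1 \<and> signal r3 = 1 then r3\<lparr>bullet := 1, shield := 0, signal := 0\<rparr> else r3);
         (l6, r6) =
           (if bullet l4 > 0 \<and> leader r5 = 1 then
              (l4\<lparr>bullet := 0\<rparr>,
               if bullet l4 = 2 \<and> shield r5 = 0 then r5\<lparr>leader := 0\<rparr> else r5)
            else if bullet l4 > 0 \<and> leader r5 = 0 then
              (l4\<lparr>bullet := 0\<rparr>,
               (if bullet r5 = 0 then r5\<lparr>bullet := bullet l4\<rparr> else r5)\<lparr>signal := 0\<rparr>)
            else (l4, r5));
         l7 = l6\<lparr>signal := max (signal l6) (max (signal r6) (leader r6))\<rparr>
     in (l7, r6))"

definition interact :: "nat \<Rightarrow> nat \<Rightarrow> config \<Rightarrow> nat \<Rightarrow> config" where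
  "interact N n C i = (let j = (i + 1) mod n; (l', r') = delta N (C i) (C j)
                       in C(i := l', j := r'))"

definition step :: "nat \<Rightarrow> nat \<Rightarrow> config \<Rightarrow> config \<Rightarrow> bool" where
  "step N n C C' \<longleftrightarrow> (\<exists>i<n. C' = interact N n C i)"

definition reachable :: "nat \<Rightarrow> nat \<Rightarrow> config \<Rightarrow> config \<Rightarrow> bool" where
  "reachable N n C C' \<longleftrightarrow> (step N n)\<^sup>*\<^sup>* C C'"

definition at :: "config \<Rightarrow> nat \<Rightarrow> int \<Rightarrow> agent" where
  "at C n k = C (nat (k mod int n))"

definition has_leader :: "nat \<Rightarrow> config \<Rightarrow> bool" where
  "has_leader n C \<longleftrightarrow> (\<exists>i<n. leader (C i) = 1)"

definition distL :: "nat \<Rightarrow> config \<Rightarrow> int \<Rightarrow> nat" where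
  "distL n C i = (LEAST j. leader (at C n (i - int j)) = 1)"

definition distR :: "nat \<Rightarrow> config \<Rightarrow> int \<Rightarrow> nat" where
  "distR n C i = (LEAST j. leader (at C n (i + int j)) = 1)"

definition peaceful :: "nat \<Rightarrow> config \<Rightarrow> int \<Rightarrow> bool" where
  "peaceful n C i \<longleftrightarrow> shield (at C n (i - int (distL n C i))) = 1 \<and>
     (\<forall>j\<le>distL n C i. signal (at C n (i - int j)) = 0)"

definition modest :: "nat \<Rightarrow> config \<Rightarrow> int \<Rightarrow> bool" where
  "modest n C i \<longleftrightarrow> peaceful n C i \<and>
     (\<forall>j\<le>distL n C i. dst (at C n (i - int j)) \<le> distL n C (i - int j))"

definition secure :: "nat \<Rightarrow> nat \<Rightarrow> config \<Rightarrow> int \<Rightarrow> bool" where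
  "secure N n C i \<longleftrightarrow>
     (if leader (at C n i) = 1 then dst (at C n i) = 0
      else int (dst (at C n i)) \<le> int N - int (distR n C i))"

definition C_PB :: "nat \<Rightarrow> config set" where
  "C_PB n = {C. has_leader n C \<and> (\<forall>j<n. bullet (C j) = 2 \<longrightarrow> peaceful n C (int j))}"

definition C_NI :: "nat \<Rightarrow> nat \<Rightarrow> config set" where
  "C_NI N n = {C. C \<in> C_PB n \<and> (\<forall>i<n. secure N n C (int i)) \<and>
                  (\<forall>j<n. bullet (C j) = 2 \<longrightarrow> modest n C (int j))}"

end

theory Submission
  imports Defs
begin


definition dL :: "(int \<Rightarrow> agent) \<Rightarrow> int \<Rightarrow> nat" where
  "dL A x = (LEAST j. leader (A (x - int j)) = 1)"
definition dR :: "(int \<Rightarrow> agent) \<Rightarrow> int \<Rightarrow> nat" where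
  "dR A x = (LEAST j. leader (A (x + int j)) = 1)"
definition pc :: "(int \<Rightarrow> agent) \<Rightarrow> int \<Rightarrow> bool" where
  "pc A x \<longleftrightarrow> shield (A (x - int (dL A x))) = 1 \<and> (\<forall>j\<le>dL A x. signal (A (x - int j)) = 0)"
definition md :: "(int \<Rightarrow> agent) \<Rightarrow> int \<Rightarrow> bool" where
  "md A x \<longleftrightarrow> pc A x \<and> (\<forall>j\<le>dL A x. dst (A (x - int j)) \<le> dL A (x - int j))"
definition sc :: "nat \<Rightarrow> (int \<Rightarrow> agent) \<Rightarrow> int \<Rightarrow> bool" where
  "sc N A x \<longleftrightarrow> (leader (A x) = 1 \<longrightarrow> dst (A x) = 0) \<and> (leader (A x) \<noteq> 1 \<longrightarrow> dst (A x) + dR A x \<le> N)"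
definition NI :: "nat \<Rightarrow> (int \<Rightarrow> agent) \<Rightarrow> bool" where
  "NI N A \<longleftrightarrow> (\<exists>k. leader (A k) = 1) \<and> (\<forall>x. sc N A x) \<and> (\<forall>x. bullet (A x) = 2 \<longrightarrow> md A x)"
definition periodic :: "nat \<Rightarrow> (int \<Rightarrow> agent) \<Rightarrow> bool" where
  "periodic n A \<longleftrightarrow> (\<forall>a. A a = A (a mod int n))"

lemma per_cong: "periodic n A \<Longrightarrow> a mod int n = b mod int n \<Longrightarrow> A a = A b"
  unfolding periodic_def by metis

lemma dL_ex:
  assumes "periodic n A" "0 < n" "leader (A k) = 1"
  shows "\<exists>j<n. leader (A (x - int j)) = 1"
proof -
  define j where "j = nat ((x - k) mod int n)"
  have j: "int j = (x - k) mod int n" using assms(2) by (simp add: j_def)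
  have "j < n" using assms(2) j by (metis of_nat_less_iff pos_mod_bound of_nat_0_less_iff)
  moreover have "(x - int j) mod int n = k mod int n"
    using j by (simp add: mod_diff_right_eq)
  hence "A (x - int j) = A k" using per_cong[OF assms(1)] by blast
  ultimately show ?thesis using assms(3) by auto
qed

lemma dR_ex:
  assumes "periodic n A" "0 < n" "leader (A k) = 1"
  shows "\<exists>j<n. leader (A (x + int j)) = 1"
proof -
  define j where "j = nat ((k - x) mod int n)"
  have j: "int j = (k - x) mod int n" using assms(2) by (simp add: j_def)
  have "j < n" using assms(2) j by (metis of_nat_less_iff pos_mod_bound of_nat_0_less_iff)
  moreover have "(x + int j) mod int n = k mod int n"
    using j by (simp add: mod_add_right_eq)
  hence "A (x + int j) = A k" using per_cong[OF assms(1)] by blast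
  ultimately show ?thesis using assms(3) by auto
qed

locale ring = fixes n :: nat and A :: "int \<Rightarrow> agent"
  assumes per: "periodic n A" and npos: "0 < n" and hl: "\<exists>k. leader (A k) = 1"
begin

lemma dL_lead: "leader (A (x - int (dL A x))) = 1"
  using dL_ex[OF per npos] hl unfolding dL_def by (metis (mono_tags, lifting) LeastI)
lemma dL_lt: "dL A x < n"
  using dL_ex[OF per npos] hl unfolding dL_def by (meson Least_le le_less_trans)
lemma dL_min: "j < dL A x \<Longrightarrow> leader (A (x - int j)) \<noteq> 1"
  unfolding dL_def by (rule not_less_Least)
lemma dR_lead: "leader (A (x + int (dR A x))) = 1"
  using dR_ex[OF per npos] hl unfolding dR_def by (metis (mono_tags, lifting) LeastI)
lemma dR_lt: "dR A x < n"
  using dR_ex[OF per npos] hl unfolding dR_def by (meson Least_le le_less_trans)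
lemma dR_min: "j < dR A x \<Longrightarrow> leader (A (x + int j)) \<noteq> 1"
  unfolding dR_def by (rule not_less_Least)
end

lemma dL_eqI: "leader (A (x - int k)) = 1 \<Longrightarrow> (\<And>j. j < k \<Longrightarrow> leader (A (x - int j)) \<noteq> 1) \<Longrightarrow> dL A x = k"
  unfolding dL_def by (rule Least_equality) (auto simp: not_less[symmetric])
lemma dR_eqI: "leader (A (x + int k)) = 1 \<Longrightarrow> (\<And>j. j < k \<Longrightarrow> leader (A (x + int j)) \<noteq> 1) \<Longrightarrow> dR A x = k"
  unfolding dR_def by (rule Least_equality) (auto simp: not_less[symmetric])
lemma dR_le: "leader (A (x + int k)) = 1 \<Longrightarrow> dR A x \<le> k"
  unfolding dR_def by (rule Least_le)

context ring begin
lemma dL_shift: "m \<le> dL A x \<Longrightarrow> dL A (x - int m) = dL A x - m"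
  apply (rule dL_eqI)
  using dL_lead[of x] apply (simp add: of_nat_diff algebra_simps)
  using dL_min[of "m + _" x] by (simp add: algebra_simps)
lemma dL_suc: "leader (A x) \<noteq> 1 \<Longrightarrow> dL A x = Suc (dL A (x - 1))"
proof (rule dL_eqI)
  show "leader (A (x - int (Suc (dL A (x - 1))))) = 1" using dL_lead[of "x-1"] by (simp add: algebra_simps)
  fix j assume "leader (A x) \<noteq> 1" "j < Suc (dL A (x - 1))"
  then show "leader (A (x - int j)) \<noteq> 1" using dL_min[of "j - 1" "x - 1"]
    by (cases j) (auto simp: algebra_simps)
qed
lemma dR_suc: "leader (A x) \<noteq> 1 \<Longrightarrow> dR A x = Suc (dR A (x + 1))"
proof (rule dR_eqI)
  show "leader (A (x + int (Suc (dR A (x + 1))))) = 1" using dR_lead[of "x+1"] by (simp add: algebra_simps)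
  fix j assume "leader (A x) \<noteq> 1" "j < Suc (dR A (x + 1))"
  then show "leader (A (x + int j)) \<noteq> 1" using dR_min[of "j - 1" "x + 1"]
    by (cases j) (auto simp: algebra_simps)
qed
end

definition l1d :: "agent \<Rightarrow> nat" where "l1d l = (if leader l = 1 then 0 else dst l)"
definition bl4 :: "agent \<Rightarrow> nat" where "bl4 l = (if leader l = 1 \<and> signal l = 1 then 2 else bullet l)"
definition sg4 :: "agent \<Rightarrow> nat" where "sg4 l = (if leader l = 1 \<and> signal l = 1 then 0 else signal l)"
definition sh5 :: "agent \<Rightarrow> nat" where "sh5 r = (if leader r = 1 \<and> signal r = 1 then 0 else shield r)"

locale dlt = fixes N :: nat and l r :: agent
  assumes vl: "valid_state N l" and vr: "valid_state N r" and N2: "2 \<le> N"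
  and h1: "leader r \<noteq> 1 \<Longrightarrow> bullet r = 0 \<Longrightarrow> l1d l + 1 < N"
  and h2: "leader r \<noteq> 1 \<Longrightarrow> bullet r \<noteq> 0 \<Longrightarrow> dst r < N"
begin
definition "lp = fst (delta N l r)"
definition "rp = snd (delta N l r)"
definition "l1 = (if leader l = 1 then l\<lparr>dst := 0\<rparr> else l)"
definition "r2 = (if leader r = 1 then r\<lparr>dst := 0\<rparr>
               else if bullet r = 0 then r\<lparr>dst := min (dst l1 + 1) N\<rparr> else r)"
definition "r3 = (if dst r2 = N then r2\<lparr>leader := 1, bullet := 2, shield := 1, signal := 0, dst := 0\<rparr> else r2)"
definition "l4 = (if leader l1 = 1 \<and> signal l1 = 1 then l1\<lparr>bullet := 2, shield := 1, signal := 0\<rparr> else l1)"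
definition "r5 = (if leader r3 = 1 \<and> signal r3 = 1 then r3\<lparr>bullet := 1, shield := 0, signal := 0\<rparr> else r3)"
definition "p6 = (if bullet l4 > 0 \<and> leader r5 = 1 then
              (l4\<lparr>bullet := 0\<rparr>,
               if bullet l4 = 2 \<and> shield r5 = 0 then r5\<lparr>leader := 0\<rparr> else r5)
            else if bullet l4 > 0 \<and> leader r5 = 0 then
              (l4\<lparr>bullet := 0\<rparr>,
               (if bullet r5 = 0 then r5\<lparr>bullet := bullet l4\<rparr> else r5)\<lparr>signal := 0\<rparr>)
            else (l4, r5))"
definition "l7 = (fst p6)\<lparr>signal := max (signal (fst p6)) (max (signal (snd p6)) (leader (snd p6)))\<rparr>"

lemma delta_eq: "delta N l r = (l7, snd p6)"
  unfolding delta_def Let_def l1_def[symmetric] r2_def[symmetric] r3_def[symmetric] l4_def[symmetric]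
    r5_def[symmetric] p6_def[symmetric] l7_def
  by (simp only: split_beta)

lemma r3_eq: "r3 = r2"
  using vl vr N2 h1 h2 unfolding r3_def r2_def l1_def l1d_def valid_state_def by auto

lemma l1f: "leader l1 = leader l" "signal l1 = signal l" "bullet l1 = bullet l" "shield l1 = shield l" "dst l1 = l1d l"
  unfolding l1_def l1d_def by auto
lemma r2f: "leader r2 = leader r" "signal r2 = signal r" "bullet r2 = bullet r" "shield r2 = shield r"
   "dst r2 = (if leader r = 1 then 0 else if bullet r = 0 then min (l1d l + 1) N else dst r)"
  unfolding r2_def by (auto simp: l1f)
lemma l4f: "leader l4 = leader l" "signal l4 = sg4 l" "bullet l4 = bl4 l" "dst l4 = l1d l"
  "shield l4 = (if leader l = 1 \<and> signal l = 1 then 1 else shield l)"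
  unfolding l4_def sg4_def bl4_def by (auto simp: l1f)
lemma r5f: "leader r5 = leader r" "shield r5 = sh5 r" "dst r5 = dst r2"
  "signal r5 = (if leader r = 1 then 0 else signal r)"
  "bullet r5 = (if leader r = 1 \<and> signal r = 1 then 1 else bullet r)"
  using vr unfolding r5_def sh5_def r3_eq valid_state_def by (auto simp: r2f)

lemma lrange: "leader r = 0 \<or> leader r = 1" using vr unfolding valid_state_def by auto

definition "kill \<longleftrightarrow> leader r = 1 \<and> bl4 l = 2 \<and> sh5 r = 0"

lemma lpf: "leader lp = leader l" "bullet lp = 0" "dst lp = l1d l"
  "shield lp = (if leader l = 1 \<and> signal l = 1 then 1 else shield l)"
  "signal lp = max (sg4 l) (max (signal rp) (leader rp))"
  using lrange unfolding lp_def rp_def delta_eq l7_def p6_def by (auto simp: l4f r5f)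

lemma rpf: "leader rp = (if kill then 0 else leader r)"
  "dst rp = (if leader r = 1 then 0 else if bullet r = 0 then min (l1d l + 1) N else dst r)"
  "shield rp = sh5 r"
  "signal rp = (if leader r = 1 then 0 else if bl4 l > 0 then 0 else signal r)"
  "bullet rp = (if leader r = 1 then (if signal r = 1 then 1 else bullet r)
      else if bl4 l > 0 \<and> bullet r = 0 then bl4 l else bullet r)"
  using lrange unfolding rp_def delta_eq p6_def kill_def by (auto simp: l4f r5f r2f)

lemma valid': "valid_state N lp" "valid_state N rp"
  using vl vr unfolding valid_state_def lpf rpf l1d_def sg4_def sh5_def bl4_def 
  by (auto simp: max_def)
end



locale stp =
  fixes N n :: nat and A A' :: "int \<Rightarrow> agent" and i :: int
  assumes n2: "2 \<le> n" and nN: "n \<le> N" and per: "periodic n A"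
  and val: "\<And>k. valid_state N (A k)" and inv: "NI N A"
  and A'def: "\<And>k. A' k = (if k mod int n = i mod int n then fst (delta N (A i) (A (i+1)))
            else if (k - 1) mod int n = i mod int n then snd (delta N (A i) (A (i+1))) else A k)"
begin

definition P :: "int \<Rightarrow> bool" where "P k \<longleftrightarrow> k mod int n = i mod int n"

lemma hl: "\<exists>k. leader (A k) = 1" using inv unfolding NI_def by blast
lemma scA: "sc N A x" using inv unfolding NI_def by blast
lemma mdA: "bullet (A x) = 2 \<Longrightarrow> md A x" using inv unfolding NI_def by blast

sublocale R: ring n A using per hl n2 by unfold_locales auto

lemma Peq: "P a \<Longrightarrow> P b \<Longrightarrow> a - b < int n \<Longrightarrow> b - a < int n \<Longrightarrow> a = b"
proof -
  assume "P a" "P b" "a - b < int n" "b - a < int n"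
  then have "int n dvd (a - b)" unfolding P_def by (metis mod_eq_dvd_iff)
  then obtain q where q: "a - b = int n * q" by (auto elim: dvdE)
  have "q = 0"
  proof (rule ccontr)
    assume "q \<noteq> 0"
    then have "q \<ge> 1 \<or> q \<le> -1" by auto
    then show False
    proof
      assume "q \<ge> 1" then have "int n * q \<ge> int n * 1" by (intro mult_left_mono) auto
      then show False using q \<open>a - b < int n\<close> by simp
    next
      assume "q \<le> -1" then have "int n * q \<le> int n * (-1)" by (intro mult_left_mono) auto
      then show False using q \<open>b - a < int n\<close> by simp
    qed
  qed
  then show "a = b" using q by simp
qed

lemma P_add: "P a \<Longrightarrow> (a + c) mod int n = (i + c) mod int n"
  unfolding P_def by (metis mod_add_left_eq)

lemma per': "periodic n A'"
  unfolding periodic_def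
proof
  fix a
  have 1: "(a mod int n) mod int n = a mod int n" by simp
  have 2: "(a mod int n - 1) mod int n = (a - 1) mod int n" by (simp add: mod_diff_left_eq)
  have 3: "A a = A (a mod int n)" using per unfolding periodic_def by blast
  show "A' a = A' (a mod int n)" unfolding A'def 1 2 3 by simp
qed

lemma cg_mod: "P a \<Longrightarrow> b - a = c - i \<or> b - a = c - i + int n \<Longrightarrow> b mod int n = c mod int n"
proof -
  assume "P a" and h: "b - a = c - i \<or> b - a = c - i + int n"
  have "b mod int n = (a + (c - i)) mod int n" using h
  proof
    assume "b - a = c - i + int n"
    then have "b = (a + (c - i)) + int n" by simp
    then show ?thesis by simp
  next
    assume "b - a = c - i"
    then have "b = a + (c - i)" by simp
    then show ?thesis by simp
  qed
  also have "... = (i + (c - i)) mod int n" by (rule P_add[OF \<open>P a\<close>])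
  finally show ?thesis by simp
qed
lemma cgA: "P a \<Longrightarrow> b - a = c - i \<Longrightarrow> A b = A c"
  using cg_mod[of a b c] per_cong[OF per] by blast
lemma cgA': "P a \<Longrightarrow> b - a = c - i \<Longrightarrow> A' b = A' c"
  using cg_mod[of a b c] per_cong[OF per'] by blast
lemma cgAn: "P a \<Longrightarrow> b - a = c - i + int n \<Longrightarrow> A b = A c"
  using cg_mod[of a b c] per_cong[OF per] by blast
lemma cgAn': "P a \<Longrightarrow> b - a = c - i + int n \<Longrightarrow> A' b = A' c"
  using cg_mod[of a b c] per_cong[OF per'] by blast

lemma Pi: "P i" unfolding P_def by simp
lemma A_P: "P k \<Longrightarrow> A k = A i" using cgA[of k k i] by simp
lemma A_P1: "P (k - 1) \<Longrightarrow> A k = A (i + 1)" using cgA[of "k-1" k "i+1"] by simp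
lemma notboth: "P k \<Longrightarrow> P (k - 1) \<Longrightarrow> False" using Peq[of k "k-1"] n2 by auto

lemma dR_cg: "a mod int n = b mod int n \<Longrightarrow> dR A a = dR A b"
proof -
  assume h: "a mod int n = b mod int n"
  have "\<And>j. A (a + j) = A (b + j)"
    by (rule per_cong[OF per]) (metis h mod_add_left_eq)
  then show ?thesis unfolding dR_def by simp
qed
lemma dL_cg: "a mod int n = b mod int n \<Longrightarrow> dL A a = dL A b"
proof -
  assume h: "a mod int n = b mod int n"
  have "\<And>j. A (a - j) = A (b - j)"
    by (rule per_cong[OF per]) (metis h mod_diff_left_eq)
  then show ?thesis unfolding dL_def by simp
qed

lemma dRi: "leader (A i) \<noteq> 1 \<Longrightarrow> dR A i = Suc (dR A (i+1))" by (rule R.dR_suc)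
lemma dR_pos: "leader (A x) \<noteq> 1 \<Longrightarrow> dR A x \<ge> 1"
  using R.dR_lead[of x] by (cases "dR A x") auto

sublocale D: dlt N "A i" "A (i+1)"
proof
  show "valid_state N (A i)" "valid_state N (A (i+1))" by (rule val)+
  show "2 \<le> N" using n2 nN by simp
  show "l1d (A i) + 1 < N" if "leader (A (i + 1)) \<noteq> 1" "bullet (A (i + 1)) = 0"
  proof (cases "leader (A i) = 1")
    case True then show ?thesis using n2 nN by (simp add: l1d_def)
  next
    case False
    have "dst (A i) + dR A i \<le> N" using scA[of i] False unfolding sc_def by auto
    moreover have "dR A (i+1) \<ge> 1" using dR_pos that(1) by blast
    ultimately show ?thesis using dRi[OF False] False by (simp add: l1d_def)
  qed
  show "dst (A (i + 1)) < N" if "leader (A (i + 1)) \<noteq> 1" "bullet (A (i + 1)) \<noteq> 0"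
    using scA[of "i+1"] dR_pos[of "i+1"] that unfolding sc_def by auto
qed

lemma A'_P: "P k \<Longrightarrow> A' k = D.lp" unfolding A'def D.lp_def P_def[symmetric] by simp
lemma A'_P1: "P (k - 1) \<Longrightarrow> A' k = D.rp" using notboth[of k] unfolding A'def D.rp_def P_def[symmetric] by auto
lemma A'_o: "\<not> P k \<Longrightarrow> \<not> P (k - 1) \<Longrightarrow> A' k = A k" unfolding A'def P_def[symmetric] by simp

lemma kill_lead: "D.kill \<Longrightarrow> leader (A (i+1)) = 1" unfolding D.kill_def by simp

lemma LA: "leader (A' k) = 1 \<longleftrightarrow> leader (A k) = 1 \<and> \<not> (P (k - 1) \<and> D.kill)"
proof -
  consider "P k" | "P (k - 1)" | "\<not> P k" "\<not> P (k - 1)" by blast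
  then show ?thesis
  proof cases
    case 1 then show ?thesis using A'_P A_P notboth D.lpf by auto
  next
    case 2 then show ?thesis using A'_P1 A_P1 D.rpf(1) kill_lead by auto
  qed (simp add: A'_o)
qed

lemma LA1: "leader (A' k) = 1 \<Longrightarrow> leader (A k) = 1" using LA by blast

lemma nokill_dL: "\<not> D.kill \<Longrightarrow> dL A' x = dL A x" unfolding dL_def using LA by simp
lemma nokill_dR: "\<not> D.kill \<Longrightarrow> dR A' x = dR A x" unfolding dR_def using LA by simp


lemma K1: "D.kill \<Longrightarrow> leader (A i) = 1 \<or> (leader (A i) \<noteq> 1 \<and> bullet (A i) = 2 \<and> md A i)"
  using mdA[of i] unfolding D.kill_def bl4_def by (auto split: if_splits)

lemma kl0: "leader (A i) = 1 \<Longrightarrow> dL A i = 0" by (rule dL_eqI) auto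
lemma kl_pos: "leader (A i) \<noteq> 1 \<Longrightarrow> dL A i \<ge> 1" using R.dL_lead[of i] by (cases "dL A i") auto
lemma kl0': "dL A i = 0 \<Longrightarrow> leader (A i) = 1" using kl_pos by fastforce

lemma mdE: "md B x \<Longrightarrow> j \<le> dL B x \<Longrightarrow> signal (B (x - int j)) = 0 \<and> dst (B (x - int j)) \<le> dL B (x - int j)"
  unfolding md_def pc_def by auto
lemma mdS: "md B x \<Longrightarrow> shield (B (x - int (dL B x))) = 1"
  unfolding md_def pc_def by auto

lemma K2: assumes k: "D.kill" shows "\<not> P (i - int (dL A i) - 1)"
proof
  assume p: "P (i - int (dL A i) - 1)"
  have e: "A (i - int (dL A i)) = A (i + 1)" using A_P1[OF p[simplified]] by simp
  show False using K1[OF k]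
  proof
    assume "leader (A i) = 1"
    then show False using kl0 p notboth[of i] Pi by auto
  next
    assume "leader (A i) \<noteq> 1 \<and> bullet (A i) = 2 \<and> md A i"
    then have "shield (A (i+1)) = 1" "signal (A (i+1)) = 0"
      using mdS[of A i] mdE[of A i "dL A i"] e by auto
    then show False using k unfolding D.kill_def sh5_def by auto
  qed
qed

lemma K3: "D.kill \<Longrightarrow> leader (A' (i - int (dL A i))) = 1"
  using LA R.dL_lead K2 by (simp add: algebra_simps)

lemma HL': "\<exists>k. leader (A' k) = 1"
proof (cases D.kill)
  case True then show ?thesis using K3 by blast
next
  case False then show ?thesis using hl LA by blast
qed

sublocale R': ring n A' using per' HL' n2 by unfold_locales auto

lemma KA: assumes k: "D.kill" and m: "0 < m" "m \<le> dL A i" shows "A' (i - int m) = A (i - int m)"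
proof (rule A'_o)
  have kl: "dL A i < n" by (rule R.dL_lt)
  show "\<not> P (i - int m)" using Peq[OF _ Pi, of "i - int m"] m kl by auto
  show "\<not> P (i - int m - 1)"
  proof (cases "m = dL A i")
    case True then show ?thesis using K2[OF k] by simp
  next
    case False then show ?thesis using Peq[OF _ Pi, of "i - int m - 1"] m kl by auto
  qed
qed

lemma KS: assumes k: "D.kill" and m: "m \<le> dL A i"
  shows "signal (A' (i - int m)) = 0 \<and> dst (A' (i - int m)) \<le> dL A i - m"
proof (cases "m = 0")
  case True
  have lp: "A' i = D.lp" using A'_P Pi by simp
  have rp: "leader D.rp = 0" "signal D.rp = 0" using k kill_lead[OF k] D.rpf by auto
  from K1[OF k] show ?thesis
  proof
    assume "leader (A i) = 1"
    then show ?thesis using True lp rp val[of i] D.lpf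
      unfolding sg4_def l1d_def valid_state_def by auto
  next
    assume "leader (A i) \<noteq> 1 \<and> bullet (A i) = 2 \<and> md A i"
    then show ?thesis using True lp rp D.lpf mdE[of A i 0]
      unfolding sg4_def l1d_def by auto
  qed
next
  case False
  then have "dL A i \<ge> 1" using m by simp
  then have "leader (A i) \<noteq> 1" using kl0 by auto
  then have md: "md A i" using K1[OF k] by auto
  show ?thesis using KA[OF k, of m] False m mdE[OF md m] R.dL_shift[OF m] by auto
qed

lemma KSsh: assumes k: "D.kill" shows "shield (A' (i - int (dL A i))) = 1"
proof (cases "dL A i = 0")
  case True
  then have ld: "leader (A i) = 1" by (rule kl0')
  have lp: "A' i = D.lp" using A'_P Pi by simp
  show ?thesis
  proof (cases "signal (A i) = 1")
    case True then show ?thesis using lp ld D.lpf \<open>dL A i = 0\<close> by simp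
  next
    case False
    then have "bullet (A i) = 2" using k ld unfolding D.kill_def bl4_def by simp
    then have "md A i" by (rule mdA)
    then show ?thesis using mdS[of A i] lp ld D.lpf False \<open>dL A i = 0\<close> by simp
  qed
next
  case False
  then have "leader (A i) \<noteq> 1" using kl0 by auto
  then have md: "md A i" using K1[OF k] by auto
  show ?thesis using KA[OF k, of "dL A i"] False mdS[OF md] by auto
qed


lemma dLk1: assumes k: "D.kill" and p: "\<not> P (x - int (dL A x) - 1)" shows "dL A' x = dL A x"
proof (rule dL_eqI)
  show "leader (A' (x - int (dL A x))) = 1" using LA R.dL_lead[of x] p by simp
  fix j assume "j < dL A x" then show "leader (A' (x - int j)) \<noteq> 1" using LA1 R.dL_min by blast
qed

lemma dLk2: assumes k: "D.kill" and p: "P (x - int (dL A x) - 1)" shows "dL A' x = dL A x + 1 + dL A i"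
proof (rule dL_eqI)
  have "A' (x - int (dL A x + 1 + dL A i)) = A' (i - int (dL A i))"
    by (rule cgA'[OF p]) simp
  then show "leader (A' (x - int (dL A x + 1 + dL A i))) = 1" using K3[OF k] by simp
  fix j assume j: "j < dL A x + 1 + dL A i"
  consider "j < dL A x" | "j = dL A x" | "j > dL A x" by linarith
  then show "leader (A' (x - int j)) \<noteq> 1"
  proof cases
    case 1 then show ?thesis using LA1 R.dL_min by blast
  next
    case 2 then show ?thesis using LA[of "x - int j"] p k by simp
  next
    case 3
    define m where "m = j - dL A x - 1"
    have m: "m < dL A i" "j = dL A x + 1 + m" using j 3 unfolding m_def by auto
    have "A (x - int j) = A (i - int m)" by (rule cgA[OF p]) (simp add: m)
    then show ?thesis using LA1[of "x - int j"] R.dL_min[OF m(1)] by auto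
  qed
qed

lemma SC: "sc N A' x"
proof -
  consider "P x" | "P (x - 1)" | "\<not> P x" "\<not> P (x - 1)" by blast
  then show ?thesis
  proof cases
    case 1
    have e: "A' x = D.lp" "A x = A i" using A'_P A_P 1 by auto
    show ?thesis
    proof (cases "leader (A i) = 1")
      case True then show ?thesis using e D.lpf unfolding sc_def l1d_def by simp
    next
      case False
      show ?thesis
      proof (cases D.kill)
        case True
        then have md: "md A i" using K1 False by auto
        have d: "dst (A i) \<le> dL A i" using mdE[OF md, of 0] by simp
        have "A' (x + int (n - dL A i)) = A' (i - int (dL A i))"
          by (rule cgAn'[OF 1]) (use R.dL_lt[of i] in simp)
        then have "dR A' x \<le> n - dL A i" using K3[OF True] dR_le[of A' x] by simp
        then show ?thesis using e D.lpf False d nN R.dL_lt[of i] unfolding sc_def l1d_def by simp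
      next
        case nk: False
        show ?thesis using scA[of x] e D.lpf False nokill_dR[OF nk] unfolding sc_def l1d_def by simp
      qed
    qed
  next
    case 2
    have e: "A' x = D.rp" "A x = A (i + 1)" using A'_P1 A_P1 2 by auto
    show ?thesis
    proof (cases "leader (A (i+1)) = 1")
      case True
      then show ?thesis using e D.rpf(2) R'.dR_lt[of x] nN unfolding sc_def by simp
    next
      case False
      then have nk: "\<not> D.kill" using kill_lead by blast
      have lr: "leader D.rp \<noteq> 1" using D.rpf(1) nk False by simp
      have dx: "dR A x = dR A (i + 1)" by (rule dR_cg[OF cg_mod[OF 2]]) simp
      have dr: "dR A' x = dR A (i + 1)" using nokill_dR[OF nk] dx by simp
      show ?thesis
      proof (cases "bullet (A (i+1)) = 0")
        case b0: True
        show ?thesis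
        proof (cases "leader (A i) = 1")
          case True
          then show ?thesis using e lr dr D.rpf(2) False b0 R.dR_lt[of "i+1"] nN
            unfolding sc_def l1d_def by simp
        next
          case lf: False
          have "dst (A i) + dR A i \<le> N" using scA[of i] lf unfolding sc_def by simp
          then show ?thesis using e lr dr D.rpf(2) False b0 dRi[OF lf]
            unfolding sc_def l1d_def by simp
        qed
      next
        case b1: False
        then show ?thesis using e lr dr D.rpf(2) False scA[of x] dx
          unfolding sc_def by simp
      qed
    qed
  next
    case 3
    have e: "A' x = A x" using A'_o 3 by simp
    show ?thesis
    proof (cases "leader (A x) = 1")
      case True then show ?thesis using e scA[of x] unfolding sc_def by simp
    next
      case lx: False
      show ?thesis
      proof (cases D.kill)
        case nk: False then show ?thesis using e scA[of x] nokill_dR[OF nk] unfolding sc_def by simp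
      next
        case k: True
        define d where "d = dR A x"
        show ?thesis
        proof (cases "P (x + int d - 1)")
          case False
          have "dR A' x = d" unfolding d_def
          proof (rule dR_eqI)
            show "leader (A' (x + int (dR A x))) = 1" using LA R.dR_lead[of x] False d_def by simp
            fix j assume "j < dR A x" then show "leader (A' (x + int j)) \<noteq> 1" using LA1 R.dR_min by blast
          qed
          then show ?thesis using e scA[of x] d_def unfolding sc_def by simp
        next
          case True
          have d1: "d \<ge> 1" using dR_pos lx d_def by simp
          define m where "m = d - 1"
          have pm: "P (x + int m)" using True d1 unfolding m_def by (simp add: of_nat_diff diff_add_eq add_diff_eq)
          have nl: "leader (A (i - int j)) \<noteq> 1" if "j \<le> m" for j
          proof -
            have "A (x + int (m - j)) = A (i - int j)" by (rule cgA[OF pm]) (use that in simp)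
            moreover have "m - j < dR A x" using that d1 unfolding m_def d_def by simp
            ultimately show ?thesis using R.dR_min by metis
          qed
          have klm: "m < dL A i"
          proof (rule ccontr)
            assume "\<not> m < dL A i" then show False using nl[of "dL A i"] R.dL_lead[of i] by simp
          qed
          then have "leader (A i) \<noteq> 1" using kl0 by auto
          then have md: "md A i" using K1[OF k] by auto
          have ax: "A x = A (i - int m)" by (rule cgA[OF pm]) simp
          have dx: "dst (A x) \<le> dL A i - m" using mdE[OF md, of m] klm R.dL_shift[of m i] ax by simp
          have "A' (x + int (n - (dL A i - m))) = A' (i - int (dL A i))"
            by (rule cgAn'[OF pm]) (use R.dL_lt[of i] klm in simp)
          then have "dR A' x \<le> n - (dL A i - m)" using K3[OF k] dR_le[of A' x] by simp
          then show ?thesis using e lx dx LA1[of x] nN R.dL_lt[of i] unfolding sc_def by auto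
        qed
      qed
    qed
  qed
qed


lemma mdI': assumes "shield (A' (x - int (dL A' x))) = 1"
  and "\<And>j. j \<le> dL A' x \<Longrightarrow> signal (A' (x - int j)) = 0 \<and> dst (A' (x - int j)) \<le> dL A' x - j"
  shows "md A' x"
  using assms R'.dL_shift unfolding md_def pc_def by auto

lemma vA: "leader (A k) \<le> 1" "signal (A k) \<le> 1" using val[of k] unfolding valid_state_def by auto

lemma MD_r: assumes p: "P (x - 1)" and b: "bullet (A' x) = 2" shows "md A' x"
proof -
  have e: "A' x = D.rp" "A x = A (i + 1)" "A (x - 1) = A i" using A'_P1 A_P1 A_P p by auto
  show ?thesis
  proof (cases "leader (A (i+1)) = 1")
    case True
    have br: "signal (A (i+1)) \<noteq> 1" "bullet (A (i+1)) = 2" using b e True D.rpf(5) by (auto split: if_splits)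
    have md: "md A x" using mdA br e by simp
    have d0: "dL A x = 0" by (rule dL_eqI) (use True e in auto)
    have sr: "shield (A (i+1)) = 1" "signal (A (i+1)) = 0"
      using mdS[OF md] mdE[OF md, of 0] d0 e by auto
    have nk: "\<not> D.kill" using sr unfolding D.kill_def sh5_def by simp
    have "dL A' x = 0" by (rule dL_eqI) (use True e D.rpf(1) nk in auto)
    then show ?thesis using e D.rpf True sr nk by (intro mdI') (auto simp: sh5_def)
  next
    case False
    then have nk: "\<not> D.kill" using kill_lead by blast
    have dl: "dL A' y = dL A y" for y using nokill_dL[OF nk] .
    define k where "k = dL A (x - 1)"
    have dx: "dL A x = Suc k" unfolding k_def using R.dL_suc False e by simp
    have lr0: "leader (A (i+1)) = 0" "leader D.rp = 0" using False vA[of "i+1"] D.rpf(1) nk by auto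
    have klt: "k + 1 < n"
    proof (rule ccontr)
      assume "\<not> k + 1 < n"
      then have "k + 1 = n" using R.dL_lt[of "x-1"] unfolding k_def by simp
      moreover have "A (x - 1 - int k) = A x"
      proof (rule per_cong[OF per])
        have "x - 1 - int k = x - int n" using \<open>k + 1 = n\<close> by simp
        moreover have "(x - int n) mod int n = x mod int n" by (metis diff_add_cancel mod_add_self2)
        ultimately show "(x - 1 - int k) mod int n = x mod int n" by metis
      qed
      ultimately show False using R.dL_lead[of "x-1"] False e unfolding k_def by simp
    qed
    have pos: "A' (x - int j) = A (x - int j)" if "2 \<le> j" "j \<le> k + 1" for j
    proof (rule A'_o)
      show "\<not> P (x - int j)" using Peq[OF _ p, of "x - int j"] that klt by auto
      show "\<not> P (x - int j - 1)" using Peq[OF _ p, of "x - int j - 1"] that klt by auto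
    qed
    have lp: "A' (x - 1) = D.lp" using A'_P p by simp
    have lp': "A' (x - int 1) = D.lp" using lp by simp
    show ?thesis
    proof (cases "bullet (A (i+1)) = 2")
      case True
      have md: "md A x" using mdA True e by simp
      have sl: "signal (A i) = 0" using mdE[OF md, of 1] dx e by simp
      have sr: "signal D.rp = 0" using mdE[OF md, of 0] e D.rpf(4) False by simp
      have sh: "shield (A' (x - int (dL A' x))) = 1"
      proof (cases "k = 0")
        case True
        then show ?thesis using lp D.lpf(4) sl mdS[OF md] dx dl e by simp
      next
        case False
        then show ?thesis using pos[of "k+1"] mdS[OF md] dx dl by simp
      qed
      show ?thesis
      proof (rule mdI'[OF sh])
        fix j assume j: "j \<le> dL A' x"
        then have j': "j \<le> k + 1" using dl dx by simp
        consider "j = 0" | "j = 1" | "2 \<le> j" by linarith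
        then show "signal (A' (x - int j)) = 0 \<and> dst (A' (x - int j)) \<le> dL A' x - j"
        proof cases
          case 1 then show ?thesis using e sr D.rpf(2) True False mdE[OF md, of 0] dl by simp
        next
          case 2
          have "dst (A i) \<le> k" using mdE[OF md, of 1] dx e unfolding k_def by simp
          then show ?thesis using 2 lp' D.lpf sl sr lr0 dl dx unfolding sg4_def l1d_def by simp
        next
          case 3
          then show ?thesis using pos[OF 3 j'] mdE[OF md, of j] R.dL_shift[of j x] j' dx dl by simp
        qed
      qed
    next
      case bn2: False
      have bb: "bullet (A (i+1)) = 0" "bl4 (A i) = 2" using b e D.rpf(5) False bn2 by (auto split: if_splits)
      have sr: "signal D.rp = 0" "dst D.rp \<le> l1d (A i) + 1" using D.rpf(4) D.rpf(2) False bb by auto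
      show ?thesis
      proof (cases "leader (A i) = 1")
        case True
        have k0: "k = 0" unfolding k_def by (rule dL_eqI) (use True e in auto)
        have sl: "sg4 (A i) = 0" using True vA[of i] unfolding sg4_def by auto
        have sh: "shield D.lp = 1"
        proof (cases "signal (A i) = 1")
          case True then show ?thesis using D.lpf(4) \<open>leader (A i) = 1\<close> by simp
        next
          case False
          then have "bullet (A i) = 2" using bb unfolding bl4_def by (auto split: if_splits)
          then have "md A (x - 1)" using mdA e by simp
          then have "shield (A (x - 1)) = 1" using mdS[of A "x-1"] k0 unfolding k_def by simp
          then show ?thesis using D.lpf(4) False e by simp
        qed
        show ?thesis
        proof (rule mdI')
          show "shield (A' (x - int (dL A' x))) = 1" using sh lp dl dx k0 by simp
          fix j assume "j \<le> dL A' x"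
          then have "j = 0 \<or> j = 1" using dl dx k0 by auto
          then show "signal (A' (x - int j)) = 0 \<and> dst (A' (x - int j)) \<le> dL A' x - j"
            using e lp' sr sl lr0 D.lpf True dl dx k0 unfolding l1d_def by auto
        qed
      next
        case lf: False
        have "bullet (A i) = 2" using bb lf unfolding bl4_def by simp
        then have mdl: "md A (x - 1)" using mdA e by simp
        have k1: "k \<ge> 1" using lf e R.dL_lead[of "x-1"] unfolding k_def by (cases "dL A (x - 1)") auto
        have dl0: "dst (A i) \<le> k" "signal (A i) = 0" using mdE[OF mdl, of 0] e unfolding k_def by auto
        show ?thesis
        proof (rule mdI')
          show "shield (A' (x - int (dL A' x))) = 1"
            using pos[of "k+1"] k1 mdS[OF mdl] dl dx unfolding k_def by (simp add: algebra_simps)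
          fix j assume j: "j \<le> dL A' x"
          then have j': "j \<le> k + 1" using dl dx by simp
          consider "j = 0" | "j = 1" | "2 \<le> j" by linarith
          then show "signal (A' (x - int j)) = 0 \<and> dst (A' (x - int j)) \<le> dL A' x - j"
          proof cases
            case 1 then show ?thesis using e sr dl0 lf dl dx unfolding l1d_def by simp
          next
            case 2 then show ?thesis using lp' D.lpf sr dl0 lr0 lf dl dx unfolding sg4_def l1d_def by simp
          next
            case 3
            have "A (x - int j) = A (x - 1 - int (j - 1))" using 3 by (simp add: algebra_simps)
            moreover have "j - 1 \<le> dL A (x - 1)" using j' unfolding k_def by simp
            ultimately show ?thesis using pos[OF 3 j'] mdE[OF mdl, of "j-1"] R.dL_shift[of "j-1" "x-1"] dl dx 3
              unfolding k_def by (simp; linarith)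
          qed
        qed
      qed
    qed
  qed
qed


lemma MD_o: assumes p: "\<not> P x" "\<not> P (x - 1)" and b: "bullet (A' x) = 2" shows "md A' x"
proof -
  have md: "md A x" using mdA b A'_o[OF p] by simp
  define k where "k = dL A x"
  have kn: "k < n" unfolding k_def by (rule R.dL_lt)
  have mE: "signal (A (x - int j)) = 0 \<and> dst (A (x - int j)) \<le> k - j" if "j \<le> k" for j
    using mdE[OF md, of j] R.dL_shift[of j x] that unfolding k_def by simp
  have mS: "shield (A (x - int k)) = 1" using mdS[OF md] unfolding k_def .
  show ?thesis
  proof (cases D.kill)
    case nk: False
    have dl: "dL A' y = dL A y" for y using nokill_dL[OF nk] .
    have G: "signal (A' (x - int j)) = 0 \<and> dst (A' (x - int j)) \<le> k - j \<and>
             (j = k \<longrightarrow> shield (A' (x - int j)) = 1)" if j: "j \<le> k" for j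
    proof -
      consider "P (x - int j)" | "P (x - int j - 1)" | "\<not> P (x - int j)" "\<not> P (x - int j - 1)" by blast
      then show ?thesis
      proof cases
        case 1
        have j1: "j \<ge> 1" using 1 p by (cases j) auto
        have e: "A' (x - int j) = D.lp" "A (x - int j) = A i" using A'_P A_P 1 by auto
        have er: "A (x - int (j - 1)) = A (i + 1)" using A_P1[of "x - int (j - 1)"] 1 j1 by (simp add: of_nat_diff)
        have lr: "leader (A (i + 1)) \<noteq> 1" using R.dL_min[of "j - 1" x] er j j1 unfolding k_def by simp
        have lr0: "leader D.rp = 0" using lr vA[of "i+1"] D.rpf(1) kill_lead by auto
        have sl: "signal (A i) = 0" "dst (A i) \<le> k - j" using mE[OF j] e by auto
        have sr: "signal (A (i+1)) = 0" using mE[of "j-1"] er j by simp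
        have srp: "signal D.rp = 0" using D.rpf(4) sr lr by simp
        show ?thesis using e sl srp lr0 D.lpf mS unfolding sg4_def l1d_def by auto
      next
        case 2
        have e: "A' (x - int j) = D.rp" "A (x - int j) = A (i + 1)" "A (x - int (j + 1)) = A i"
          using A'_P1 A_P1 A_P 2 by (auto simp: algebra_simps)
        show ?thesis
        proof (cases "j = k")
          case True
          have "leader (A (i+1)) = 1" using R.dL_lead[of x] e True unfolding k_def by simp
          moreover have "signal (A (i+1)) = 0" "shield (A (i+1)) = 1" using mE[OF j] mS e True by auto
          ultimately show ?thesis using e D.rpf True unfolding sh5_def by simp
        next
          case False
          have lr: "leader (A (i + 1)) \<noteq> 1" using R.dL_min[of j x] e j False unfolding k_def by simp
          have sl: "signal (A i) = 0" "dst (A i) \<le> k - (j + 1)" using mE[of "j+1"] e j False by auto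
          have sr: "signal (A (i+1)) = 0" "dst (A (i+1)) \<le> k - j" using mE[OF j] e by auto
          have "dst D.rp \<le> k - j" using D.rpf(2) lr sr sl j False unfolding l1d_def by auto
          then show ?thesis using e D.rpf(4) lr sr False by simp
        qed
      next
        case 3 then show ?thesis using A'_o[OF 3] mE[OF j] mS by auto
      qed
    qed
    show ?thesis
    proof (rule mdI')
      show "shield (A' (x - int (dL A' x))) = 1" using G[of k] dl unfolding k_def by simp
      fix j assume "j \<le> dL A' x" then show "signal (A' (x - int j)) = 0 \<and> dst (A' (x - int j)) \<le> dL A' x - j"
        using G[of j] dl unfolding k_def by simp
    qed
  next
    case k: True
    have lr: "leader (A (i+1)) = 1" using kill_lead[OF k] .
    show ?thesis
    proof (cases "P (x - int k - 1)")
      case False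
      have dl: "dL A' x = k" using dLk1[OF k] False unfolding k_def by simp
      have same: "A' (x - int j) = A (x - int j)" if j: "j \<le> k" for j
      proof (rule A'_o)
        show "\<not> P (x - int j)"
        proof
          assume pj: "P (x - int j)"
          then have j1: "j \<ge> 1" using p by (cases j) auto
          have "A (x - int (j - 1)) = A (i + 1)" using A_P1[of "x - int (j - 1)"] pj j1 by (simp add: of_nat_diff)
          moreover have "j - 1 < dL A x" using j j1 unfolding k_def by simp
          ultimately show False using R.dL_min[of "j - 1" x] lr by simp
        qed
        show "\<not> P (x - int j - 1)"
        proof
          assume pj: "P (x - int j - 1)"
          then have "A (x - int j) = A (i + 1)" using A_P1 by simp
          then have "\<not> j < k" using R.dL_min[of j x] lr unfolding k_def by auto
          then show False using pj False j by simp
        qed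
      qed
      show ?thesis
      proof (rule mdI')
        show "shield (A' (x - int (dL A' x))) = 1" using same[of k] mS dl by simp
        fix j assume "j \<le> dL A' x" then show "signal (A' (x - int j)) = 0 \<and> dst (A' (x - int j)) \<le> dL A' x - j"
          using same[of j] mE[of j] dl by simp
      qed
    next
      case True
      have dl: "dL A' x = k + 1 + dL A i" using dLk2[OF k] True unfolding k_def by simp
      show ?thesis
      proof (rule mdI')
        have "A' (x - int (k + 1 + dL A i)) = A' (i - int (dL A i))" by (rule cgA'[OF True]) simp
        then show "shield (A' (x - int (dL A' x))) = 1" using KSsh[OF k] dl by simp
        fix j assume j: "j \<le> dL A' x"
        consider "j < k" | "j = k" | "j > k" by linarith
        then show "signal (A' (x - int j)) = 0 \<and> dst (A' (x - int j)) \<le> dL A' x - j"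
        proof cases
          case 1
          have "\<not> P (x - int j)"
          proof
            assume pj: "P (x - int j)"
            show False
            proof (cases "j = 0")
              case True then show False using pj p by simp
            next
              case False then show False using Peq[OF pj True] 1 kn by simp
            qed
          qed
          moreover have "\<not> P (x - int j - 1)" using Peq[OF _ True, of "x - int j - 1"] 1 kn by auto
          ultimately show ?thesis using A'_o mE[of j] 1 dl by (simp; linarith)
        next
          case 2
          have "A' (x - int j) = D.rp" using A'_P1 True 2 by simp
          then show ?thesis using D.rpf lr by simp
        next
          case 3
          define m where "m = j - k - 1"
          have m: "m \<le> dL A i" "j = k + 1 + m" using j 3 dl unfolding m_def by auto
          have "A' (x - int j) = A' (i - int m)" by (rule cgA'[OF True]) (simp add: m)
          then show ?thesis using KS[OF k m(1)] dl m by simp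
        qed
      qed
    qed
  qed
qed

lemma MD: "bullet (A' x) = 2 \<Longrightarrow> md A' x"
proof -
  assume b: "bullet (A' x) = 2"
  consider "P x" | "P (x - 1)" | "\<not> P x" "\<not> P (x - 1)" by blast
  then show ?thesis
  proof cases
    case 1 then show ?thesis using b A'_P D.lpf(2) by simp
  next
    case 2 then show ?thesis using MD_r b by blast
  next
    case 3 then show ?thesis using MD_o b by blast
  qed
qed

theorem NI': "NI N A'" unfolding NI_def using HL' SC MD by blast

end

lemma at_per: "0 < n \<Longrightarrow> periodic n (at C n)"
  unfolding periodic_def at_def by simp

lemma per_dL: "periodic n A \<Longrightarrow> a mod int n = b mod int n \<Longrightarrow> dL A a = dL A b"
proof -
  assume p: "periodic n A" and h: "a mod int n = b mod int n"
  have "\<And>j. A (a - j) = A (b - j)"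
    by (rule per_cong[OF p]) (metis h mod_diff_left_eq)
  then show ?thesis unfolding dL_def by simp
qed
lemma per_dR: "periodic n A \<Longrightarrow> a mod int n = b mod int n \<Longrightarrow> dR A a = dR A b"
proof -
  assume p: "periodic n A" and h: "a mod int n = b mod int n"
  have "\<And>j. A (a + j) = A (b + j)"
    by (rule per_cong[OF p]) (metis h mod_add_left_eq)
  then show ?thesis unfolding dR_def by simp
qed
lemma per_md: "periodic n A \<Longrightarrow> a mod int n = b mod int n \<Longrightarrow> md A a = md A b"
proof -
  assume p: "periodic n A" and h: "a mod int n = b mod int n"
  have h2: "\<And>j. (a - j) mod int n = (b - j) mod int n" by (metis h mod_diff_left_eq)
  have "\<And>j. A (a - j) = A (b - j)" by (rule per_cong[OF p]) (rule h2)
  moreover have "\<And>j. dL A (a - j) = dL A (b - j)" by (rule per_dL[OF p h2])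
  moreover have "dL A a = dL A b" by (rule per_dL[OF p h])
  ultimately show ?thesis unfolding md_def pc_def by simp
qed
lemma per_sc: "periodic n A \<Longrightarrow> a mod int n = b mod int n \<Longrightarrow> sc N A a = sc N A b"
  unfolding sc_def using per_cong per_dR by metis

lemma all_mod: "0 < n \<Longrightarrow> (\<And>a b. a mod int n = b mod int n \<Longrightarrow> Q a = Q b) \<Longrightarrow>
   (\<forall>i<n. Q (int i)) \<longleftrightarrow> (\<forall>x. Q x)"
proof safe
  fix x assume n: "0 < n" and c: "\<And>a b. a mod int n = b mod int n \<Longrightarrow> Q a = Q b" and h: "\<forall>i<n. Q (int i)"
  define t where "t = nat (x mod int n)"
  have t: "int t = x mod int n" "t < n" using n unfolding t_def by (auto simp: nat_less_iff)
  have "Q (int t)" using h t by auto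
  moreover have "int t mod int n = x mod int n" using t by simp
  ultimately show "Q x" using c by metis
qed auto

lemma NI_iff: assumes n: "0 < n" shows "C \<in> C_NI N n \<longleftrightarrow> NI N (at C n)"
proof -
  let ?A = "at C n"
  have p: "periodic n ?A" by (rule at_per[OF n])
  have dl: "distL n C = dL ?A" unfolding distL_def dL_def by (rule ext) simp
  have dr: "distR n C = dR ?A" unfolding distR_def dR_def by (rule ext) simp
  have mdq: "modest n C x = md ?A x" for x unfolding modest_def md_def peaceful_def pc_def dl by simp
  have pq: "peaceful n C x = pc ?A x" for x unfolding peaceful_def pc_def dl by simp
  have scq: "secure N n C x = sc N ?A x" for x unfolding secure_def sc_def dr by auto
  have atc: "at C n (int j) = C j" if "j < n" for j using that unfolding at_def by simp
  have hl: "has_leader n C \<longleftrightarrow> (\<exists>k. leader (?A k) = 1)"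
  proof
    assume "has_leader n C" then show "\<exists>k. leader (?A k) = 1" unfolding has_leader_def using atc by metis
  next
    assume "\<exists>k. leader (?A k) = 1"
    then obtain k where "leader (?A k) = 1" by blast
    moreover have "nat (k mod int n) < n" using n by (simp add: nat_less_iff)
    ultimately show "has_leader n C" unfolding has_leader_def at_def by blast
  qed
  have s1: "(\<forall>i<n. secure N n C (int i)) \<longleftrightarrow> (\<forall>x. sc N ?A x)"
    unfolding scq by (rule all_mod[OF n]) (rule per_sc[OF p])
  have s2: "(\<forall>j<n. bullet (C j) = 2 \<longrightarrow> modest n C (int j)) \<longleftrightarrow> (\<forall>x. bullet (?A x) = 2 \<longrightarrow> md ?A x)"
  proof -
    have "(\<forall>j<n. bullet (C j) = 2 \<longrightarrow> modest n C (int j)) \<longleftrightarrow> (\<forall>j<n. bullet (?A (int j)) = 2 \<longrightarrow> md ?A (int j))"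
      using atc mdq by auto
    also have "\<dots> \<longleftrightarrow> (\<forall>x. bullet (?A x) = 2 \<longrightarrow> md ?A x)"
      by (rule all_mod[OF n]) (metis per_cong[OF p] per_md[OF p])
    finally show ?thesis .
  qed
  have s3: "(\<forall>j<n. bullet (C j) = 2 \<longrightarrow> peaceful n C (int j))" if "\<forall>j<n. bullet (C j) = 2 \<longrightarrow> modest n C (int j)"
    using that unfolding modest_def by auto
  show ?thesis unfolding C_NI_def C_PB_def NI_def using hl s1 s2 s3 by auto
qed

lemma mod_m1: "0 < n \<Longrightarrow> ((k::int) - 1) mod int n = b mod int n \<longleftrightarrow> k mod int n = (b + 1) mod int n"
  by (metis add_diff_cancel_right' diff_add_cancel mod_add_left_eq mod_diff_left_eq)

lemma step_pres:
  assumes n2: "2 \<le> n" and nN: "n \<le> N" and v: "valid_config N n C" and c: "C \<in> C_NI N n"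
    and s: "step N n C C'"
  shows "valid_config N n C' \<and> C' \<in> C_NI N n"
proof -
  have n: "0 < n" using n2 by simp
  obtain i where i: "i < n" and C': "C' = interact N n C i" using s unfolding step_def by blast
  define j where "j = (i + 1) mod n"
  have j: "j < n" "i \<noteq> j" using n2 i unfolding j_def
    by (auto simp: mod_Suc)
  define A where "A = at C n"
  define A' where "A' = at C' n"
  have Ai: "A (int i) = C i" using i unfolding A_def at_def by simp
  have Aj: "A (int i + 1) = C j" unfolding A_def at_def j_def by (simp add: nat_mod_as_int add.commute)
  have C'e: "C' = C(i := fst (delta N (C i) (C j)), j := snd (delta N (C i) (C j)))"
    unfolding C' interact_def Let_def j_def by (simp add: split_beta)
  have vA: "valid_state N (A k)" for k
    using v n unfolding A_def at_def valid_config_def by (simp add: nat_less_iff)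
  have A'def: "A' k = (if k mod int n = int i mod int n then fst (delta N (A (int i)) (A (int i + 1)))
            else if (k - 1) mod int n = int i mod int n then snd (delta N (A (int i)) (A (int i + 1))) else A k)" for k
  proof -
    define t where "t = nat (k mod int n)"
    have t: "int t = k mod int n" "t < n" using n unfolding t_def by (auto simp: nat_less_iff)
    have e1: "k mod int n = int i mod int n \<longleftrightarrow> t = i" using t i by auto
    have e2: "(k - 1) mod int n = int i mod int n \<longleftrightarrow> t = j"
    proof -
      have "(k - 1) mod int n = int i mod int n \<longleftrightarrow> k mod int n = (int i + 1) mod int n" by (rule mod_m1[OF n])
      also have "(int i + 1) mod int n = int j" unfolding j_def by (simp add: zmod_int add.commute)
      finally show ?thesis using t by auto
    qed
    have "A' k = C' t" unfolding A'_def at_def t_def ..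
    then show ?thesis unfolding e1 e2 C'e Ai Aj using j by (auto simp: A_def at_def t_def)
  qed
  interpret S: stp N n A A' "int i"
    using n2 nN at_per[OF n] vA c NI_iff[OF n] A'def unfolding A_def A'_def by unfold_locales auto
  have "NI N A'" by (rule S.NI')
  then have cni: "C' \<in> C_NI N n" using NI_iff[OF n] unfolding A'_def by simp
  have vl: "valid_state N (fst (delta N (C i) (C j)))" using S.D.valid'(1)[unfolded S.D.lp_def] unfolding Ai Aj .
  have vr: "valid_state N (snd (delta N (C i) (C j)))" using S.D.valid'(2)[unfolded S.D.rp_def] unfolding Ai Aj .
  have "valid_config N n C'"
    unfolding valid_config_def C'e using vl vr v j unfolding valid_config_def by auto
  then show ?thesis using cni by simp
qed

theorem lemma6:
  fixes N n :: nat and C C' :: config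
  assumes "2 \<le> n" and "n \<le> N"
    and "valid_config N n C"
    and "C \<in> C_NI N n"
    and "reachable N n C C'"
  shows "C' \<in> C_NI N n"
proof -
  have "(step N n)\<^sup>*\<^sup>* C C'" using assms(5) unfolding reachable_def .
  then have "valid_config N n C' \<and> C' \<in> C_NI N n"
  proof (induction rule: rtranclp_induct)
    case base then show ?case using assms by simp
  next
    case (step y z) then show ?case using step_pres assms(1,2) by blast
  qed
  then show ?thesis by simp
qed

end
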